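(* Let $K\ge2$, $1<\theta<\frac32$, $T>0$, and let $\boldsymbol\xi=(\xi_1,\dots,\xi_K)$ be $C^1$ on $[T,\infty)$ satisfying $$\dot\xi_1=-t^{-1}\gamma_1\big(e^{-(\xi_2-\xi_1)}-1\big)+r_1(t),$$ $$\dot\xi_k=t^{-1}\Big(\gamma_{k-1}\big(e^{-(\xi_k-\xi_{k-1})}-1\big)-\gamma_k\big(e^{-(\xi_{k+1}-\xi_k)}-1\big)\Big)+r_k(t),\quad 2\le k\le K-1,$$ $$\dot\xi_K=t^{-1}\gamma_{K-1}\big(e^{-(\xi_K-\xi_{K-1})}-1\big)+r_K(t),$$ where $\gamma_k=\frac{k(K-k)}{2}$ and $|r_k(t)|\le Ct^{-\theta}$, and assume $\big|\sum_{k=1}^K\xi_k(t)\big|\le Ct^{-\theta+1}$ for all $t\ge T$. Then $\xi_k(t)=O(t^{-\theta+1})$ as $t\to\infty$ for every $k=1,\dots,K$. *)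

theory Defs
  imports "HOL-Analysis.Analysis" "HOL-Library.Landau_Symbols"
begin

definition gam :: "nat \<Rightarrow> nat \<Rightarrow> real" where
  "gam K k = real k * (real K - real k) / 2"

end

theory Submission
  imports Defs
begin

lemma compare_phi:
  fixes E E' :: "real \<Rightarrow> real"
  assumes t0: "t0 > 0" and cont: "continuous_on {t0..} E"
  and der: "\<And>t. t > t0 \<Longrightarrow> (E has_real_derivative E' t) (at t)"
  and ineq: "\<And>t. t > t0 \<Longrightarrow> E' t \<le> -(a/t) * E t + B * t powr (-p)"
  and tt: "t \<ge> t0" and ne: "a+1-p \<noteq> 0"
  shows "t powr a * E t - B/(a+1-p) * t powr (a+1-p) \<le> t0 powr a * E t0 - B/(a+1-p) * t0 powr (a+1-p)"
proof -
  define \<Phi> where "\<Phi> x = x powr a * E x - B/(a+1-p) * x powr (a+1-p)" for x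
  have "\<Phi> t \<le> \<Phi> t0"
  proof (rule DERIV_nonpos_imp_decreasing_open[OF tt])
    fix x assume x: "t0 < x" "x < t"
    have xpos: "x > 0" using x t0 by linarith
    have d: "(\<Phi> has_real_derivative (a * x powr (a-1) * E x + x powr a * E' x - B/(a+1-p) * ((a+1-p) * x powr (a+1-p-1)))) (at x)"
      unfolding \<Phi>_def
      by (rule derivative_eq_intros DERIV_fun_powr der[OF x(1)] DERIV_ident refl | use xpos in simp)+
    have e1: "x powr (a-1) = x powr a / x" using xpos by (simp add: powr_diff)
    have e2: "x powr (a+1-p-1) = x powr a * x powr (-p)" using xpos by (simp add: powr_add[symmetric])
    have "x powr a * E' x \<le> x powr a * (-(a/x) * E x + B * x powr (-p))"
      using ineq[OF x(1)] by (intro mult_left_mono) auto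
    then have "a * x powr (a-1) * E x + x powr a * E' x - B/(a+1-p) * ((a+1-p) * x powr (a+1-p-1)) \<le> 0"
    proof -
      have c1: "B/(a+1-p) * ((a+1-p) * x powr (a+1-p-1)) = B * (x powr a * x powr (-p))"
        using ne unfolding e2 by simp
      have c2: "a * (x powr a / x) * E x = (a/x) * E x * x powr a" by simp
      have g: "x powr a * E' x \<le> -((a/x) * E x * x powr a) + B * (x powr a * x powr (-p))"
        using \<open>x powr a * E' x \<le> _\<close> by (simp add: algebra_simps)
      show ?thesis unfolding c1 e1 c2 using g by linarith
    qed
    then show "\<exists>y. (\<Phi> has_real_derivative y) (at x) \<and> y \<le> 0" using d by blast
  next
    have "continuous_on {t0..t} E" using cont by (rule continuous_on_subset) auto
    then show "continuous_on {t0..t} \<Phi>" unfolding \<Phi>_def using t0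
      by (intro continuous_intros) auto
  qed
  then show ?thesis unfolding \<Phi>_def .
qed

lemma h_nonneg: "0 \<le> exp(-y) - 1 + (y::real)"
  using exp_ge_add_one_self[of "-y"] by simp

lemma h_lin: "y - 1 \<le> exp(-y) - 1 + (y::real)"
  by (simp add: order_less_imp_le)

lemma h_quad: assumes "(y::real) \<le> 2" shows "y^2/4 \<le> exp(-y) - 1 + y"
proof -
  have a: "1 - y/2 \<le> exp(-y/2)" using exp_ge_add_one_self[of "-y/2"] by simp
  have "(1 - y/2)^2 \<le> exp(-y/2)^2" by (rule power_mono[OF a]) (use assms in simp)
  also have "exp(-y/2)^2 = exp(-y)" by (simp add: exp_double[symmetric] power2_eq_square exp_add[symmetric])
  finally show ?thesis by (simp add: power2_eq_square algebra_simps)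
qed

lemma h_mono: assumes "0 \<le> (e::real)" "e \<le> y" shows "exp(-e) - 1 + e \<le> exp(-y) - 1 + y"
proof -
  have "exp(-e) * (1 + (e - y)) \<le> exp(-e) * exp (e - y)"
    using exp_ge_add_one_self[of "e-y"] by (intro mult_left_mono) auto
  also have "\<dots> = exp(-y)" by (simp add: exp_add[symmetric])
  finally have 1: "exp(-e) * (1 + (e - y)) \<le> exp(-y)" .
  have "exp(-e) \<le> 1" using assms by simp
  then have "0 \<le> (1 - exp(-e)) * (y - e)" using assms by simp
  then show ?thesis using 1 by (simp add: algebra_simps)
qed

lemma sq_ge: "exp(-(y::real))*(exp(-y) - 1 + y) \<le> (exp(-y)-1)^2"
proof -
  have e: "1 + y \<le> exp y" using exp_ge_add_one_self[of y] by simp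
  have "0 \<le> exp(-y) * (exp y - 1 - y)" 
  proof (rule mult_nonneg_nonneg)
    show "0 \<le> exp y - 1 - y" using e by linarith
  qed simp
  also have "exp(-y) * (exp y - 1 - y) = 1 - exp(-y) - y*exp(-y)"
    by (simp add: algebra_simps exp_minus)
  finally show ?thesis by (simp add: power2_eq_square algebra_simps)
qed

lemma edge: fixes a b p q :: real
  assumes "p \<ge> 0" "q \<ge> 0" "p = 0 \<Longrightarrow> a = 0" "q = 0 \<Longrightarrow> b = 0"
  shows "(p - q)*(a^2/p - b^2/q) \<le> (a-b)^2"
proof (cases "p = 0")
  case True then show ?thesis using assms by (cases "q=0") (auto simp: power2_eq_square)
next
  case False
  show ?thesis
  proof (cases "q = 0")
    case True then show ?thesis using assms False by (simp add: power2_eq_square)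
  next
    case q: False
    have "0 \<le> p*q*(a/p - b/q)^2" using assms by simp
    also have "p*q*(a/p - b/q)^2 = (a-b)^2 - (p - q)*(a^2/p - b^2/q)"
      using False q by (simp add: field_simps power2_eq_square)
    finally show ?thesis by simp
  qed
qed

lemma amgm: fixes e t d r :: real assumes "e > 0" "t > 0"
  shows "-(d*r) \<le> (e/t)*d^2 + (t/(4*e))*r^2"
proof -
  have "0 \<le> (2*e*d + t*r)^2/(4*e*t)" using assms by simp
  also have "(2*e*d + t*r)^2/(4*e*t) = (e/t)*d^2 + (t/(4*e))*r^2 + d*r"
    using assms by (simp add: field_simps power2_eq_square)
  finally show ?thesis by simp
qed

lemma sbp1: fixes \<phi> q :: "nat \<Rightarrow> real" assumes "n \<ge> 1"
  shows "(\<Sum>k=1..n. (\<phi>(k-1)-\<phi> k)*(q(k-1)-q k)) =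
    (\<Sum>k=1..n-1. q k * (2*\<phi> k - \<phi>(k-1) - \<phi>(k+1))) + q 0*(\<phi> 0 - \<phi> 1) + q n*(\<phi> n - \<phi>(n-1))"
  using assms
proof (induction n rule: nat_induct_at_least)
  case base then show ?case by (simp add: algebra_simps)
next
  case (Suc n)
  have "(\<Sum>k=1..Suc n. (\<phi>(k-1)-\<phi> k)*(q(k-1)-q k)) = (\<Sum>k=1..n. (\<phi>(k-1)-\<phi> k)*(q(k-1)-q k)) + (\<phi> n-\<phi> (Suc n))*(q n-q (Suc n))"
    by simp
  moreover have "(\<Sum>k=1..Suc n - 1. q k * (2*\<phi> k - \<phi>(k-1) - \<phi>(k+1))) = (\<Sum>k=1..n - 1. q k * (2*\<phi> k - \<phi>(k-1) - \<phi>(k+1))) + q n * (2*\<phi> n - \<phi>(n-1) - \<phi>(n+1))"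
    using Suc.hyps by (cases n) auto
  ultimately show ?case using Suc.IH by (simp add: algebra_simps)
qed

lemma sbp2: fixes F x :: "nat \<Rightarrow> real" assumes "n \<ge> 1"
  shows "(\<Sum>k=1..n-1. F k * (x(k+1) - x k)) = (\<Sum>k=1..n. (F(k-1) - F k) * x k) - F 0 * x 1 + F n * x n"
  using assms
proof (induction n rule: nat_induct_at_least)
  case base then show ?case by (simp add: algebra_simps)
next
  case (Suc n)
  have "(\<Sum>k=1..Suc n - 1. F k * (x(k+1) - x k)) = (\<Sum>k=1..n - 1. F k * (x(k+1) - x k)) + F n * (x(n+1) - x n)"
    using Suc.hyps by (cases n) auto
  then show ?case using Suc.IH by (simp add: algebra_simps)
qed

lemma gam_2nd: "k \<ge> 1 \<Longrightarrow> 2 * gam K k - gam K (k-1) - gam K (k+1) = 1"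
proof -
  assume "k \<ge> 1"
  then obtain n where k: "k = Suc n" by (cases k) auto
  have "2 * (real (Suc n) * (real K - real (Suc n))) - real n * (real K - real n) - real (Suc (Suc n)) * (real K - real (Suc (Suc n))) = 2"
    by (simp add: algebra_simps)
  then show ?thesis unfolding k gam_def by (simp add: field_simps)
qed

lemma gam_pos: "1 \<le> k \<Longrightarrow> k < K \<Longrightarrow> gam K k \<ge> 1/2"
proof -
  assume a: "1 \<le> k" "k < K"
  have "real k \<ge> 1" "real K - real k \<ge> 1" using a by auto
  then have "real k * (real K - real k) \<ge> 1 * 1" by (intro mult_mono) auto
  then show ?thesis by (simp add: gam_def)
qed

lemma picone: fixes F :: "nat \<Rightarrow> real" assumes K: "K \<ge> 1" "F 0 = 0" "F K = 0"
  shows "(\<Sum>k=1..K-1. F k ^2 / gam K k) \<le> (\<Sum>k=1..K. (F (k-1) - F k)^2)"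
proof -
  define q where "q j = F j ^2 / gam K j" for j
  have "(\<Sum>k=1..K. (gam K (k-1) - gam K k)*(q(k-1)-q k)) \<le> (\<Sum>k=1..K. (F (k-1) - F k)^2)"
  proof (rule sum_mono)
    fix k assume k: "k \<in> {1..K}"
    have g: "gam K j \<ge> 0" if "j \<le> K" for j using that by (simp add: gam_def)
    have z: "gam K j = 0 \<Longrightarrow> F j = 0" if "j \<le> K" for j
      using that K by (cases "j = 0"; cases "j = K") (auto simp: gam_def)
    show "(gam K (k-1) - gam K k)*(q(k-1)-q k) \<le> (F (k-1) - F k)^2"
      unfolding q_def using k by (intro edge g z) auto
  qed
  also have "(\<Sum>k=1..K. (gam K (k-1) - gam K k)*(q(k-1)-q k)) = (\<Sum>k=1..K-1. q k * (2*gam K k - gam K (k-1) - gam K (k+1)))"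
    using sbp1[OF K(1), of "gam K" q] K by (simp add: q_def)
  also have "\<dots> = (\<Sum>k=1..K-1. q k)"
  proof (intro sum.cong refl)
    fix k assume "k \<in> {1..K-1}"
    then have "k \<ge> 1" by simp
    then show "q k * (2*gam K k - gam K (k-1) - gam K (k+1)) = q k" using gam_2nd[of k K] by simp
  qed
  finally show ?thesis unfolding q_def .
qed

theorem mainTheorem14:
  fixes K :: nat and \<theta> T C :: real
    and \<xi> \<xi>' r :: "nat \<Rightarrow> real \<Rightarrow> real"
  assumes K: "K \<ge> 2"
    and theta: "1 < \<theta>" "\<theta> < 3/2"
    and T: "T > 0"
    and deriv: "\<And>k t. 1 \<le> k \<Longrightarrow> k \<le> K \<Longrightarrow> t \<ge> T \<Longrightarrow>
                  (\<xi> k has_real_derivative \<xi>' k t) (at t within {T..})"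
    and cont: "\<And>k. 1 \<le> k \<Longrightarrow> k \<le> K \<Longrightarrow> continuous_on {T..} (\<xi>' k)"
    and eq1: "\<And>t. t \<ge> T \<Longrightarrow>
       \<xi>' 1 t = - (1/t) * gam K 1 * (exp (- (\<xi> 2 t - \<xi> 1 t)) - 1) + r 1 t"
    and eqk: "\<And>k t. 2 \<le> k \<Longrightarrow> k \<le> K - 1 \<Longrightarrow> t \<ge> T \<Longrightarrow>
       \<xi>' k t = (1/t) * (gam K (k - 1) * (exp (- (\<xi> k t - \<xi> (k - 1) t)) - 1)
                         - gam K k * (exp (- (\<xi> (k + 1) t - \<xi> k t)) - 1)) + r k t"
    and eqK: "\<And>t. t \<ge> T \<Longrightarrow>
       \<xi>' K t = (1/t) * gam K (K - 1) * (exp (- (\<xi> K t - \<xi> (K - 1) t)) - 1) + r K t"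
    and rbound: "\<And>k t. 1 \<le> k \<Longrightarrow> k \<le> K \<Longrightarrow> t \<ge> T \<Longrightarrow> \<bar>r k t\<bar> \<le> C * t powr (- \<theta>)"
    and sumbound: "\<And>t. t \<ge> T \<Longrightarrow> \<bar>\<Sum>k=1..K. \<xi> k t\<bar> \<le> C * t powr (1 - \<theta>)"
  shows "\<forall>k\<in>{1..K}. (\<xi> k) \<in> O[at_top](\<lambda>t. t powr (1 - \<theta>))"
proof -
  define p where "p = 2*\<theta> - 1"
  define y where "y k t = \<xi> (k+1) t - \<xi> k t" for k t
  define F where "F k t = gam K k * (exp (-(y k t)) - 1)" for k t
  define E where "E t = (\<Sum>k=1..K-1. gam K k * (exp (-(y k t)) - 1 + y k t))" for t
  define D where "D t = (\<Sum>k=1..K. (F (k-1) t - F k t)^2)" for t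
  define P where "P t = (\<Sum>k=1..K. (F (k-1) t - F k t) * r k t)" for t
  define E' where "E' t = -(1/t) * D t - P t" for t
  have K1: "K \<ge> 1" using K by simp
  have C0: "C \<ge> 0"
  proof -
    have "\<bar>r 1 T\<bar> \<le> C * T powr (-\<theta>)" by (rule rbound[OF order_refl K1 order_refl])
    then have "0 \<le> C * T powr (-\<theta>)" by (rule order_trans[OF abs_ge_zero])
    then show ?thesis using T by (simp add: zero_le_mult_iff)
  qed
  have derat: "(\<xi> k has_real_derivative \<xi>' k t) (at t)" if "1 \<le> k" "k \<le> K" "t > T" for k t
  proof -
    have d0: "(\<xi> k has_real_derivative \<xi>' k t) (at t within {T..})"
      using deriv[OF that(1,2)] that(3) by auto
    have "(\<xi> k has_real_derivative \<xi>' k t) (at t within {T<..})"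
      using d0 by (rule has_field_derivative_subset) auto
    moreover have "at t within {T<..} = at t" by (rule at_within_open) (use that(3) in auto)
    ultimately show ?thesis by simp
  qed
  have contxi: "continuous_on {T..} (\<xi> k)" if "1 \<le> k" "k \<le> K" for k
    using deriv[OF that] by (intro DERIV_continuous_on) auto
  have F0: "F 0 t = 0" for t by (simp add: F_def gam_def)
  have FK: "F K t = 0" for t by (simp add: F_def gam_def)
  have xi_eq: "\<xi>' k t = (1/t)*(F (k-1) t - F k t) + r k t" if "1 \<le> k" "k \<le> K" "t \<ge> T" for k t
  proof -
    have "k = 1 \<or> k = K \<or> (2 \<le> k \<and> k \<le> K - 1)" using that(1,2) K by presburger
    then consider "k = 1" | "k = K" | "2 \<le> k" "k \<le> K - 1" by blast
    then show ?thesis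
    proof cases
      case 1
      have Fe: "F 1 t = gam K 1 * (exp (-(\<xi> 2 t - \<xi> 1 t)) - 1)" by (simp add: F_def y_def numeral_2_eq_2)
      have "\<xi>' 1 t = (1/t)*(F 0 t - F 1 t) + r 1 t" unfolding F0 Fe eq1[OF that(3)] by (simp add: algebra_simps)
      then show ?thesis using 1 by simp
    next
      case 2 
      have "K - 1 + 1 = K" using K by simp
      then have Fe: "F (K-1) t = gam K (K-1) * (exp (-(\<xi> K t - \<xi> (K-1) t)) - 1)" by (simp add: F_def y_def)
      have "\<xi>' K t = (1/t)*(F (K-1) t - F K t) + r K t" unfolding FK Fe eqK[OF that(3)] by (simp add: algebra_simps)
      then show ?thesis using 2 by simp
    next
      case 3
      have "k - 1 + 1 = k" using 3 by simp
      then have Fe: "F (k-1) t = gam K (k-1) * (exp (-(\<xi> k t - \<xi> (k-1) t)) - 1)" by (simp add: F_def y_def)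
      have Fe2: "F k t = gam K k * (exp (-(\<xi> (k+1) t - \<xi> k t)) - 1)" by (simp add: F_def y_def)
      show ?thesis unfolding Fe Fe2 eqk[OF 3 that(3)] by (simp add: algebra_simps)
    qed
  qed
  have Eder: "(E has_real_derivative E' t) (at t)" if "t > T" for t
  proof -
    have d: "(E has_real_derivative (\<Sum>k=1..K-1. gam K k * ((-(\<xi>' (k+1) t - \<xi>' k t)) * exp (-(y k t)) + (\<xi>' (k+1) t - \<xi>' k t)))) (at t)"
      unfolding E_def
    proof (rule DERIV_sum)
      fix k assume k: "k \<in> {1..K-1}"
      have d1: "(\<xi> (k+1) has_real_derivative \<xi>' (k+1) t) (at t)" using k that by (intro derat) auto
      have d2: "(\<xi> k has_real_derivative \<xi>' k t) (at t)" using k that by (intro derat) auto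
      have dy: "((\<lambda>s. y k s) has_real_derivative (\<xi>' (k+1) t - \<xi>' k t)) (at t)"
        unfolding y_def by (rule DERIV_diff[OF d1 d2])
      show "((\<lambda>s. gam K k * (exp (-(y k s)) - 1 + y k s)) has_real_derivative
          gam K k * ((-(\<xi>' (k+1) t - \<xi>' k t)) * exp (-(y k t)) + (\<xi>' (k+1) t - \<xi>' k t))) (at t)"
        using dy by (auto intro!: derivative_eq_intros)
    qed
    have "(\<Sum>k=1..K-1. gam K k * ((-(\<xi>' (k+1) t - \<xi>' k t)) * exp (-(y k t)) + (\<xi>' (k+1) t - \<xi>' k t)))
        = -(\<Sum>k=1..K-1. F k t * (\<xi>' (k+1) t - \<xi>' k t))"
      by (simp add: F_def sum_negf[symmetric] algebra_simps)
    also have "\<dots> = -(\<Sum>k=1..K. (F (k-1) t - F k t) * \<xi>' k t)"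
      using sbp2[OF K1, of "\<lambda>k. F k t" "\<lambda>k. \<xi>' k t"] F0 FK by simp
    also have "(\<Sum>k=1..K. (F (k-1) t - F k t) * \<xi>' k t) = (\<Sum>k=1..K. (F (k-1) t - F k t) * ((1/t)*(F (k-1) t - F k t) + r k t))"
      using that by (intro sum.cong refl) (simp add: xi_eq)
    also have "\<dots> = (\<Sum>k=1..K. (1/t) * (F (k-1) t - F k t)^2 + (F (k-1) t - F k t) * r k t)"
      by (intro sum.cong refl) (simp add: power2_eq_square algebra_simps)
    also have "\<dots> = (1/t) * D t + P t"
      by (simp add: D_def P_def sum.distrib sum_distrib_left)
    finally show ?thesis using d by (simp add: E'_def)
  qed
  have Econt: "continuous_on {T..} E"
    unfolding E_def y_def by (intro continuous_intros contxi) auto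
  have gnn: "gam K k \<ge> 0" if "k \<le> K" for k using that by (simp add: gam_def)
  have Enn: "E t \<ge> 0" for t unfolding E_def
    by (intro sum_nonneg mult_nonneg_nonneg gnn h_nonneg) auto
  have hle: "gam K k * (exp (-(y k t)) - 1 + y k t) \<le> E t" if "k \<in> {1..K-1}" for k t
    unfolding E_def using that
    by (intro member_le_sum mult_nonneg_nonneg gnn h_nonneg) auto
  have Dnn: "D t \<ge> 0" for t unfolding D_def by (intro sum_nonneg) auto
  have key1: "E' t \<le> -((1-\<epsilon>)/t) * D t + real K * C^2/(4*\<epsilon>) * t powr (-p)" if "t > T" "0 < \<epsilon>" for t \<epsilon>
  proof -
    have tpos: "t > 0" using that T by linarith
    have pw: "t powr (-\<theta>) * t powr (-\<theta>) = t powr (-2*\<theta>)" by (simp add: powr_add[symmetric])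
    have trm: "-((F (k-1) t - F k t) * r k t) \<le> (\<epsilon>/t)*(F (k-1) t - F k t)^2 + (t/(4*\<epsilon>))*(C^2 * t powr (-2*\<theta>))"
      if k: "k \<in> {1..K}" for k
    proof -
      have "\<bar>r k t\<bar> \<le> C * t powr (-\<theta>)" using k \<open>t > T\<close> by (intro rbound) auto
      then have "\<bar>r k t\<bar>^2 \<le> (C * t powr (-\<theta>))^2" by (rule power_mono) simp
      moreover have eq: "(C * t powr (-\<theta>))^2 = C^2 * t powr (-2*\<theta>)"
        by (simp add: power_mult_distrib power2_eq_square powr_add[symmetric])
      ultimately have r2: "(r k t)^2 \<le> C^2 * t powr (-2*\<theta>)" by simp
      have "(t/(4*\<epsilon>))*(r k t)^2 \<le> (t/(4*\<epsilon>))*(C^2 * t powr (-2*\<theta>))"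
        using r2 tpos \<open>0 < \<epsilon>\<close> by (intro mult_left_mono) auto
      then show ?thesis using amgm[OF \<open>0 < \<epsilon>\<close> tpos, of "F (k-1) t - F k t" "r k t"] by linarith
    qed
    have "-P t = (\<Sum>k=1..K. -((F (k-1) t - F k t) * r k t))" by (simp add: P_def sum_negf)
    also have "\<dots> \<le> (\<Sum>k=1..K. (\<epsilon>/t)*(F (k-1) t - F k t)^2 + (t/(4*\<epsilon>))*(C^2 * t powr (-2*\<theta>)))"
      by (rule sum_mono) (rule trm)
    also have "\<dots> = (\<epsilon>/t) * D t + real K * ((t/(4*\<epsilon>))*(C^2 * t powr (-2*\<theta>)))"
      by (simp add: D_def sum.distrib sum_distrib_left)
    also have "(t/(4*\<epsilon>))*(C^2 * t powr (-2*\<theta>)) = C^2/(4*\<epsilon>) * (t powr 1 * t powr (-2*\<theta>))"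
      using tpos by simp
    also have "t powr 1 * t powr (-2*\<theta>) = t powr (-p)"
    proof -
      have ex: "-p = 1 + (-2*\<theta>)" unfolding p_def by simp
      show ?thesis unfolding ex by (rule powr_add[symmetric])
    qed
    finally have "-P t \<le> (\<epsilon>/t) * D t + real K * C^2/(4*\<epsilon>) * t powr (-p)" by simp
    then show ?thesis unfolding E'_def by (simp add: diff_divide_distrib algebra_simps)
  qed
  have key2: "exp(-Y) * E t \<le> D t" if Y: "\<forall>k\<in>{1..K-1}. y k t \<le> Y" for t Y
  proof -
    have "exp(-Y) * E t = (\<Sum>k=1..K-1. exp(-Y) * (gam K k * (exp (-(y k t)) - 1 + y k t)))"
      by (simp add: E_def sum_distrib_left)
    also have "\<dots> \<le> (\<Sum>k=1..K-1. (F k t)^2 / gam K k)"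
    proof (rule sum_mono)
      fix k assume k: "k \<in> {1..K-1}"
      have gp: "gam K k \<ge> 1/2" using k K by (intro gam_pos) auto
      have "exp(-Y) \<le> exp(-(y k t))" using Y k by simp
      then have "exp(-Y) * (gam K k * (exp (-(y k t)) - 1 + y k t)) \<le> exp(-(y k t)) * (gam K k * (exp (-(y k t)) - 1 + y k t))"
        using gp h_nonneg[of "y k t"] by (intro mult_right_mono) auto
      also have "\<dots> = gam K k * (exp(-(y k t)) * (exp (-(y k t)) - 1 + y k t))" by simp
      also have "\<dots> \<le> gam K k * (exp(-(y k t)) - 1)^2"
        using gp sq_ge[of "y k t"] by (intro mult_left_mono) auto
      also have "\<dots> = (F k t)^2 / gam K k" using gp by (simp add: F_def power2_eq_square)
      finally show "exp(-Y) * (gam K k * (exp (-(y k t)) - 1 + y k t)) \<le> (F k t)^2 / gam K k" .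
    qed
    also have "\<dots> \<le> D t" unfolding D_def using picone[OF K1, of "\<lambda>k. F k t"] F0 FK by simp
    finally show ?thesis .
  qed
  have pgt: "p > 1" using theta by (simp add: p_def)
  define B1 where "B1 = real K * C^2/(4*(1/2))"
  have B1nn: "B1 \<ge> 0" unfolding B1_def by simp
  define M1 where "M1 = E T - B1/(0+1-p) * T powr (0+1-p)"
  have E1: "E t \<le> M1" if "t \<ge> T" for t
  proof -
    have "t powr 0 * E t - B1/(0+1-p) * t powr (0+1-p) \<le> T powr 0 * E T - B1/(0+1-p) * T powr (0+1-p)"
    proof (rule compare_phi[where E'=E'])
      show "T > 0" by (rule T)
      show "continuous_on {T..} E" by (rule Econt)
      show "(E has_real_derivative E' s) (at s)" if "s > T" for s using Eder that .
      show "E' s \<le> -(0/s) * E s + B1 * s powr (-p)" if "s > T" for s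
      proof -
        have "0 \<le> ((1-1/2)/s) * D s" using Dnn[of s] that T by simp
        then show ?thesis using key1[OF that, of "1/2"] unfolding B1_def by simp
      qed
      show "T \<le> t" by fact
      show "0 + 1 - p \<noteq> 0" using pgt by simp
    qed
    moreover have "t powr 0 = 1" "T powr 0 = 1" using that T by auto
    moreover have "B1/(0+1-p) * t powr (0+1-p) \<le> 0"
      using B1nn pgt by (intro mult_nonpos_nonneg divide_nonneg_neg) auto
    ultimately show ?thesis unfolding M1_def by simp
  qed
  define Y1 where "Y1 = 2*M1 + 1"
  have yb_gen: "y k t \<le> 2 * e + 1" "(exp (-(y k t)) - 1 + y k t) \<le> 2 * e"
    if "E t \<le> e" "k \<in> {1..K-1}" for k t e
  proof -
    have gp: "gam K k \<ge> 1/2" using that K by (intro gam_pos) auto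
    have "gam K k * (exp (-(y k t)) - 1 + y k t) \<le> e" using hle[OF that(2), of t] that(1) by linarith
    moreover have "(1/2) * (exp (-(y k t)) - 1 + y k t) \<le> gam K k * (exp (-(y k t)) - 1 + y k t)"
      using gp h_nonneg[of "y k t"] by (intro mult_right_mono) auto
    ultimately have "(1/2) * (exp (-(y k t)) - 1 + y k t) \<le> e" by (rule order_trans[rotated])
    then show h2: "(exp (-(y k t)) - 1 + y k t) \<le> 2 * e" by simp
    then show "y k t \<le> 2 * e + 1" using h_lin[of "y k t"] by linarith
  qed
  have Ybound: "\<forall>k\<in>{1..K-1}. y k t \<le> Y1" if "t \<ge> T" for t
    using yb_gen(1)[OF E1[OF that]] unfolding Y1_def by blast
  define a2 where "a2 = min (exp(-Y1)/2) (\<theta> - 1)"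
  have a2pos: "a2 > 0" using theta by (simp add: a2_def)
  have a2le: "a2 \<le> exp(-Y1)/2" unfolding a2_def by (rule min.cobounded1)
  have a2neg: "a2 + 1 - p < 0" unfolding a2_def p_def using theta by linarith
  define M2 where "M2 = T powr a2 * E T - B1/(a2+1-p) * T powr (a2+1-p)"
  have E2: "E t \<le> M2 * t powr (-a2)" if "t \<ge> T" for t
  proof -
    have tpos: "t > 0" using that T by linarith
    have "t powr a2 * E t - B1/(a2+1-p) * t powr (a2+1-p) \<le> T powr a2 * E T - B1/(a2+1-p) * T powr (a2+1-p)"
    proof (rule compare_phi[where E'=E'])
      show "T > 0" by (rule T)
      show "continuous_on {T..} E" by (rule Econt)
      show "(E has_real_derivative E' s) (at s)" if "s > T" for s using Eder that .
      show "E' s \<le> -(a2/s) * E s + B1 * s powr (-p)" if "s > T" for s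
      proof -
        have spos: "s > 0" using that T by linarith
        have "a2 * E s \<le> (exp(-Y1)/2) * E s" using a2le Enn[of s] by (intro mult_right_mono) auto
        also have "\<dots> \<le> (1/2) * D s" using key2[OF Ybound, of s] that by simp
        finally have "a2 * E s / s \<le> (1/2) * D s / s" using spos by (intro divide_right_mono) auto
        moreover have "-(a2/s) * E s = -(a2 * E s / s)" by simp
        moreover have "-((1-1/2)/s) * D s = -((1/2) * D s / s)" by simp
        ultimately show ?thesis using key1[OF that, of "1/2"] unfolding B1_def by linarith
      qed
      show "T \<le> t" by fact
      show "a2 + 1 - p \<noteq> 0" using a2neg by simp
    qed
    moreover have "B1/(a2+1-p) * t powr (a2+1-p) \<le> 0"
      using B1nn a2neg by (intro mult_nonpos_nonneg divide_nonneg_neg) auto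
    ultimately have "t powr a2 * E t \<le> M2" unfolding M2_def by linarith
    then have "t powr (-a2) * (t powr a2 * E t) \<le> t powr (-a2) * M2" by (intro mult_left_mono) auto
    moreover have eq: "t powr (-a2) * t powr a2 = 1" using tpos by (simp add: powr_add[symmetric])
    moreover have "t powr (-a2) * (t powr a2 * E t) = E t" unfolding mult.assoc[symmetric] eq by simp
    ultimately have "E t \<le> t powr (-a2) * M2" by simp
    then show ?thesis by (simp only: mult.commute)
  qed
  define \<eta> where "\<eta> = (3/2 - \<theta>)/2"
  have eta: "0 < \<eta>" "\<eta> \<le> 1/4" using theta by (simp_all add: \<eta>_def)
  have lim: "((\<lambda>t. M2 * t powr (-a2)) \<longlongrightarrow> 0) at_top"
  proof -
    have "((\<lambda>t. M2 * t powr (-a2)) \<longlongrightarrow> M2 * 0) at_top"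
      by (intro tendsto_mult tendsto_const tendsto_neg_powr filterlim_ident) (use a2pos in simp)
    then show ?thesis by simp
  qed
  have "eventually (\<lambda>t. M2 * t powr (-a2) < \<eta>^2/16) at_top"
  proof (rule order_tendstoD(2)[OF lim])
    show "0 < \<eta>^2/16" using eta by simp
  qed
  then obtain N where N: "\<And>t. t \<ge> N \<Longrightarrow> M2 * t powr (-a2) < \<eta>^2/16"
    unfolding eventually_at_top_linorder by blast
  define t3 where "t3 = max N (T+1)"
  have t3: "t3 \<ge> T" "t3 > 0" "t3 \<ge> N" using T by (auto simp: t3_def)
  have ysmall: "\<forall>k\<in>{1..K-1}. y k t \<le> \<eta>" if "t \<ge> t3" for t
  proof
    fix k assume k: "k \<in> {1..K-1}"
    have "E t < \<eta>^2/16" using E2[of t] N[of t] that t3 by linarith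
    then have hb: "exp(-(y k t)) - 1 + y k t \<le> 2 * (\<eta>^2/16)" using yb_gen(2)[of t "\<eta>^2/16" k] k by linarith
    have e2: "\<eta>^2 > 0" using eta by simp
    show "y k t \<le> \<eta>"
    proof (rule ccontr)
      assume "\<not> y k t \<le> \<eta>"
      then have "exp(-\<eta>) - 1 + \<eta> \<le> exp(-(y k t)) - 1 + y k t" using eta by (intro h_mono) auto
      moreover have "\<eta>^2/4 \<le> exp(-\<eta>) - 1 + \<eta>" using eta by (intro h_quad) auto
      ultimately show False using hb e2 by linarith
    qed
  qed
  define c where "c = \<theta> - 1/2"
  define B3 where "B3 = real K * C^2/(4*\<eta>)"
  have B3nn: "B3 \<ge> 0" unfolding B3_def using eta by simp
  have cpos: "c + 1 - p > 0" unfolding c_def p_def using theta by linarith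
  have c_le: "c \<le> (1-\<eta>)*(1-\<eta>)"
  proof -
    have "c = 1 - 2*\<eta>" unfolding c_def \<eta>_def by (simp add: field_simps)
    moreover have "(1-\<eta>)*(1-\<eta>) = 1 - 2*\<eta> + \<eta>*\<eta>" by (simp add: algebra_simps)
    moreover have "0 \<le> \<eta>*\<eta>" by simp
    ultimately show ?thesis by linarith
  qed
  define A0 where "A0 = t3 powr c * E t3"
  have A0nn: "A0 \<ge> 0" unfolding A0_def using Enn[of t3] by simp
  define M3 where "M3 = A0 * t3 powr (-(c+1-p)) + B3/(c+1-p)"
  have E3: "E t \<le> M3 * t powr (1-p)" if "t \<ge> t3" for t
  proof -
    have tpos: "t > 0" using that t3 by linarith
    have "t powr c * E t - B3/(c+1-p) * t powr (c+1-p) \<le> t3 powr c * E t3 - B3/(c+1-p) * t3 powr (c+1-p)"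
    proof (rule compare_phi[where E'=E'])
      show "t3 > 0" using t3 by simp
      show "continuous_on {t3..} E" using Econt by (rule continuous_on_subset) (use t3 in auto)
      show "(E has_real_derivative E' s) (at s)" if "s > t3" for s
      proof -
        have "s > T" using that t3 by linarith
        then show ?thesis by (rule Eder)
      qed
      show "E' s \<le> -(c/s) * E s + B3 * s powr (-p)" if "s > t3" for s
      proof -
        have sT: "s > T" using that t3 by linarith
        have spos: "s > 0" using that t3 by linarith
        have e1: "1 - \<eta> \<le> exp(-\<eta>)" using exp_ge_add_one_self[of "-\<eta>"] by simp
        have "c * E s \<le> ((1-\<eta>)*(1-\<eta>)) * E s" using c_le Enn[of s] by (intro mult_right_mono) auto
        also have "\<dots> = (1-\<eta>) * ((1-\<eta>) * E s)" by simp
        also have "\<dots> \<le> (1-\<eta>) * (exp(-\<eta>) * E s)"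
          using e1 eta Enn[of s] by (intro mult_left_mono mult_right_mono) auto
        also have "\<dots> \<le> (1-\<eta>) * D s" using key2[OF ysmall[of s]] that eta by (intro mult_left_mono) auto
        finally have "c * E s / s \<le> (1-\<eta>) * D s / s" using spos by (intro divide_right_mono) auto
        moreover have "-(c/s) * E s = -(c * E s / s)" by simp
        moreover have "-((1-\<eta>)/s) * D s = -((1-\<eta>) * D s / s)" by simp
        ultimately show ?thesis using key1[OF sT, of \<eta>] eta unfolding B3_def by linarith
      qed
      show "t3 \<le> t" by fact
      show "c + 1 - p \<noteq> 0" using cpos by simp
    qed
    moreover have "0 \<le> B3/(c+1-p) * t3 powr (c+1-p)" using B3nn cpos by simp
    ultimately have "t powr c * E t \<le> A0 + B3/(c+1-p) * t powr (c+1-p)" unfolding A0_def by linarith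
    then have "t powr (-c) * (t powr c * E t) \<le> t powr (-c) * (A0 + B3/(c+1-p) * t powr (c+1-p))"
      by (intro mult_left_mono) auto
    moreover have eq: "t powr (-c) * t powr c = 1" using tpos by (simp add: powr_add[symmetric])
    moreover have "t powr (-c) * (t powr c * E t) = E t" unfolding mult.assoc[symmetric] eq by simp
    moreover have pp: "t powr (-c) * t powr (c+1-p) = t powr (1-p)"
    proof -
      have "t powr (-c) * t powr (c+1-p) = t powr (-c + (c+1-p))" by (rule powr_add[symmetric])
      then show ?thesis by simp
    qed
    moreover have "t powr (-c) * (A0 + B3/(c+1-p) * t powr (c+1-p)) = A0 * t powr (-c) + B3/(c+1-p) * (t powr (-c) * t powr (c+1-p))"
      by (simp add: algebra_simps)
    moreover have "A0 * t powr (-c) \<le> A0 * t3 powr (-(c+1-p)) * t powr (1-p)"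
    proof -
      have "t powr (-c) = t powr (-(c+1-p)) * t powr (1-p)"
      proof -
        have "t powr (-(c+1-p)) * t powr (1-p) = t powr (-(c+1-p) + (1-p))" by (rule powr_add[symmetric])
        then show ?thesis by simp
      qed
      moreover have "t powr (-(c+1-p)) \<le> t3 powr (-(c+1-p))"
        using cpos t3 that by (intro powr_mono2') auto
      ultimately show ?thesis using A0nn
        by (simp add: mult.assoc mult_left_mono mult_right_mono)
    qed
    ultimately show ?thesis unfolding M3_def by (simp add: algebra_simps)
  qed
  define Q where "Q = sqrt (8 * M3)"
  have ybig: "\<bar>y k t\<bar> \<le> Q * t powr (1-\<theta>)" if "t \<ge> t3" "k \<in> {1..K-1}" for k t
  proof -
    have tpos: "t > 0" using that t3 by linarith
    have h2: "exp(-(y k t)) - 1 + y k t \<le> 2 * (M3 * t powr (1-p))" by (rule yb_gen(2)[OF E3[OF that(1)] that(2)])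
    have "y k t \<le> 2" using ysmall[OF that(1)] that(2) eta by fastforce
    then have "(y k t)^2/4 \<le> exp(-(y k t)) - 1 + y k t" by (rule h_quad)
    then have y2: "(y k t)^2 \<le> 8 * M3 * t powr (1-p)" using h2 by linarith
    have "t powr (1-p) = (t powr (1-\<theta>))^2"
    proof -
      have "(t powr (1-\<theta>))^2 = t powr (1-\<theta>) * t powr (1-\<theta>)" by (simp add: power2_eq_square)
      also have "\<dots> = t powr ((1-\<theta>) + (1-\<theta>))" by (rule powr_add[symmetric])
      also have "(1-\<theta>) + (1-\<theta>) = 1 - p" unfolding p_def by simp
      finally show ?thesis by simp
    qed
    then have "(y k t)^2 \<le> 8 * M3 * (t powr (1-\<theta>))^2" using y2 by simp
    then have "sqrt ((y k t)^2) \<le> sqrt (8 * M3 * (t powr (1-\<theta>))^2)" by (rule real_sqrt_le_mono)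
    then show ?thesis unfolding Q_def by (simp add: real_sqrt_mult)
  qed
  have Qnn: "Q \<ge> 0"
  proof -
    have "\<bar>y 1 t3\<bar> \<le> Q * t3 powr (1-\<theta>)" using K by (intro ybig) auto
    then have "0 \<le> Q * t3 powr (1-\<theta>)" by (rule order_trans[OF abs_ge_zero])
    then show ?thesis using t3 by (simp add: zero_le_mult_iff)
  qed
  have diff1: "\<bar>\<xi> k t - \<xi> j t\<bar> \<le> real K * (Q * t powr (1-\<theta>))"
    if "t \<ge> t3" "1 \<le> j" "j \<le> k" "k \<le> K" for j k t
  proof -
    have "\<xi> k t - \<xi> j t = (\<Sum>i=j..<k. y i t)"
      using sum_Suc_diff'[OF that(3), of "\<lambda>i. \<xi> i t"] by (simp add: y_def)
    then have "\<bar>\<xi> k t - \<xi> j t\<bar> \<le> (\<Sum>i=j..<k. \<bar>y i t\<bar>)" by (simp add: sum_abs)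
    also have "\<dots> \<le> (\<Sum>i=j..<k. Q * t powr (1-\<theta>))"
      using that by (intro sum_mono ybig) auto
    also have "\<dots> = real (k - j) * (Q * t powr (1-\<theta>))" by simp
    also have "\<dots> \<le> real K * (Q * t powr (1-\<theta>))"
      using that Qnn by (intro mult_right_mono) auto
    finally show ?thesis .
  qed
  have diff: "\<bar>\<xi> k t - \<xi> j t\<bar> \<le> real K * (Q * t powr (1-\<theta>))"
    if "t \<ge> t3" "j \<in> {1..K}" "k \<in> {1..K}" for j k t
  proof (cases "j \<le> k")
    case True then show ?thesis using that diff1 by auto
  next
    case False
    then have "\<bar>\<xi> j t - \<xi> k t\<bar> \<le> real K * (Q * t powr (1-\<theta>))" using that diff1 by auto
    then show ?thesis by (simp add: abs_minus_commute)
  qed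
  have bnd: "\<bar>\<xi> k t\<bar> \<le> (C + real K * (real K * Q)) * t powr (1-\<theta>)" if "t \<ge> t3" "k \<in> {1..K}" for k t
  proof -
    have S: "\<bar>\<Sum>j=1..K. \<xi> j t\<bar> \<le> C * t powr (1-\<theta>)" using sumbound that t3 by simp
    have dec: "real K * \<xi> k t = (\<Sum>j=1..K. \<xi> j t) + (\<Sum>j=1..K. \<xi> k t - \<xi> j t)"
      by (simp add: sum_subtractf)
    have "\<bar>\<Sum>j=1..K. \<xi> k t - \<xi> j t\<bar> \<le> (\<Sum>j=1..K. \<bar>\<xi> k t - \<xi> j t\<bar>)" by (rule sum_abs)
    also have "\<dots> \<le> (\<Sum>j=1..K. real K * (Q * t powr (1-\<theta>)))"
      using that by (intro sum_mono diff) auto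
    also have "\<dots> = real K * (real K * (Q * t powr (1-\<theta>)))" by simp
    finally have D2: "\<bar>\<Sum>j=1..K. \<xi> k t - \<xi> j t\<bar> \<le> real K * (real K * (Q * t powr (1-\<theta>)))" .
    have "1 * \<bar>\<xi> k t\<bar> \<le> real K * \<bar>\<xi> k t\<bar>" by (rule mult_right_mono) (use K in auto)
    then have "\<bar>\<xi> k t\<bar> \<le> real K * \<bar>\<xi> k t\<bar>" by simp
    also have "\<dots> = \<bar>real K * \<xi> k t\<bar>" by (simp add: abs_mult)
    also have "\<dots> \<le> C * t powr (1-\<theta>) + real K * (real K * (Q * t powr (1-\<theta>)))"
      unfolding dec using S D2 by (intro order_trans[OF abs_triangle_ineq]) (rule add_mono)
    also have "\<dots> = (C + real K * (real K * Q)) * t powr (1-\<theta>)" by (simp add: algebra_simps)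
    finally show ?thesis .
  qed
  show ?thesis
  proof
    fix k assume k: "k \<in> {1..K}"
    show "\<xi> k \<in> O[at_top](\<lambda>t. t powr (1 - \<theta>))"
    proof (rule bigoI[where c = "C + real K * (real K * Q)"])
      show "eventually (\<lambda>t. norm (\<xi> k t) \<le> (C + real K * (real K * Q)) * norm (t powr (1 - \<theta>))) at_top"
        using eventually_ge_at_top[of t3]
      proof eventually_elim
        case (elim t)
        then show ?case using bnd[OF elim k] by simp
      qed
    qed
  qed
qed

end
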